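(* Let $\theta_0:\mathbb{R}^d\to\mathbb{R}^{d_\theta}$ be measurable and for each $N\ge1$ let $\hat\theta_N$ be a (possibly random) $\mathbb{R}^{d_\theta}$-valued estimator built from data independent of $X^s,X^t$. Suppose (i) $\|\hat\theta_N(X^s)\|_\infty\le\xi_N$ a.s. for every $N\ge1$; (ii) $\mathbb{E}\|\theta_0(X^s)\|_\infty^8<\infty$; (iii) there are constants $c>0$, $m\ge0$ with $r_0(x)\le c(\|x\|_\infty^m+1)$ for all $x$; (iv) $\mathbb{E}[r_0(X^s)^2]<\infty$; (v) $\mathbb{E}\exp(\varsigma\|X^s\|_\infty)<\infty$ for some constant $\varsigma>0$. Then for $N\ge2$, $$\mathbb{E}\|\hat\theta_N(X^t)-\theta_0(X^t)\|_2^2=\mathbb{E}\big[\|\hat\theta_N(X^s)-\theta_0(X^s)\|_2^2r_0(X^s)\big]\le c_1(\log N)^m\,\mathbb{E}\|\hat\theta_N(X^s)-\theta_0(X^s)\|_2^2+\frac{c_2d_\theta(\xi_N^2+1)}{N},$$ with constants $c_1,c_2$ not depending on $N$.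
   Context: $X^s,X^t$ are random vectors in $\mathbb{R}^d$ with Lebesgue densities $p,q$, $\{q>0\}\subset\{p>0\}$, and density ratio $r_0=q/p$ (with $0/0=0$). Expectations are over both the test point and the randomness of $\hat\theta_N$. *)

theory Defs
  imports "HOL-Analysis.Analysis" "HOL-Probability.Probability"
begin

definition linf :: "real^'n \<Rightarrow> real" where
  "linf x = Max (range (\<lambda>i. \<bar>x $ i\<bar>))"

text \<open>Real power with the convention t^0 = 1 (also for t = 0).\<close>
definition rpow :: "real \<Rightarrow> real \<Rightarrow> real" where
  "rpow t a = (if a = 0 then 1 else t powr a)"

end

theory Submission imports Defs begin

lemma linf_ge: "\<bar>x $ i\<bar> \<le> linf x"
  unfolding linf_def by (rule Max_ge) auto

lemma linf_nonneg: "0 \<le> linf x"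
  using linf_ge[of x] abs_ge_zero order_trans by blast

lemma norm_le_linf: "(norm (x::real^'n))\<^sup>2 \<le> real CARD('n) * (linf x)\<^sup>2"
proof -
  have "(norm x)\<^sup>2 = (\<Sum>i\<in>UNIV. (x $ i)\<^sup>2)"
    unfolding power2_norm_eq_inner inner_vec_def by (simp add: power2_eq_square)
  also have "\<dots> \<le> (\<Sum>i\<in>(UNIV::'n set). (linf x)\<^sup>2)"
  proof (rule sum_mono)
    fix i show "(x $ i)\<^sup>2 \<le> (linf x)\<^sup>2"
      using linf_ge[of x i] by (metis abs_le_square_iff abs_of_nonneg linf_nonneg)
  qed
  also have "\<dots> = real CARD('n) * (linf x)\<^sup>2" by simp
  finally show ?thesis .
qed

lemma distr_snd_prob:
  assumes "prob_space M" "sigma_finite_measure N"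
  shows "distr (M \<Otimes>\<^sub>M N) N snd = N"
proof (intro measure_eqI)
  fix A assume A: "A \<in> sets (distr (M \<Otimes>\<^sub>M N) N snd)"
  from A have "emeasure (distr (M \<Otimes>\<^sub>M N) N snd) A = emeasure (M \<Otimes>\<^sub>M N) (space M \<times> A)"
    by (auto simp add: emeasure_distr space_pair_measure dest: sets.sets_into_space intro!: arg_cong2[where f=emeasure])
  with A assms show "emeasure (distr (M \<Otimes>\<^sub>M N) N snd) A = emeasure N A"
    by (simp add: sigma_finite_measure.emeasure_pair_measure_Times prob_space.emeasure_space_1)
qed simp

lemma snd_integral:
  fixes g :: "'b \<Rightarrow> real"
  assumes "prob_space M" "sigma_finite_measure N" "integrable N g"
  shows "integrable (M \<Otimes>\<^sub>M N) (\<lambda>z. g (snd z))"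
    and "integral\<^sup>L (M \<Otimes>\<^sub>M N) (\<lambda>z. g (snd z)) = integral\<^sup>L N g"
proof -
  have gm: "g \<in> borel_measurable N" using assms(3) by auto
  have sm: "snd \<in> measurable (M \<Otimes>\<^sub>M N) N" by simp
  show "integrable (M \<Otimes>\<^sub>M N) (\<lambda>z. g (snd z))"
    using integrable_distr_eq[OF sm gm] distr_snd_prob[OF assms(1,2)] assms(3) by simp
  show "integral\<^sup>L (M \<Otimes>\<^sub>M N) (\<lambda>z. g (snd z)) = integral\<^sup>L N g"
    using integral_distr[OF sm gm] distr_snd_prob[OF assms(1,2)] by simp
qed

lemma amgm1:
  fixes r N E t :: real
  assumes "N \<ge> 1" "r \<ge> 0" "E \<ge> N^4"
  shows "r \<le> (r\<^sup>2 + t^8 + E) / N"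
proof -
  have "2*N*r \<le> r\<^sup>2 + N\<^sup>2" using sum_squares_ge_zero[of "r - N" 0]
    by (simp add: power2_eq_square algebra_simps)
  moreover have "N\<^sup>2 \<le> N^4" using assms(1) by (simp add: power_increasing)
  moreover have "0 \<le> t^8" by (simp add: zero_le_even_power)
  moreover have "0 \<le> r\<^sup>2" by simp
  moreover have "0 \<le> N^4" using assms by simp
  ultimately have "N*r \<le> r\<^sup>2 + t^8 + E" using assms by linarith
  then show ?thesis using assms(1) by (simp add: field_simps)
qed

lemma amgm2:
  fixes r N E t :: real
  assumes "N \<ge> 1" "r \<ge> 0" "E \<ge> N^4"
  shows "t\<^sup>2 * r \<le> (r\<^sup>2 + t^8 + E) / N"
proof -
  have a: "2*N*(t\<^sup>2*r) \<le> r\<^sup>2 + N\<^sup>2*t^4" using sum_squares_ge_zero[of "r - N*t\<^sup>2" 0]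
    by (simp add: power2_eq_square algebra_simps power4_eq_xxxx)
  have e: "(t^4 - N\<^sup>2)\<^sup>2 = t^8 - 2*N\<^sup>2*t^4 + N^4" by algebra
  have b: "2*N\<^sup>2*t^4 \<le> t^8 + N^4" using e zero_le_power2[of "t^4 - N\<^sup>2"] by linarith
  have "4*N*(t\<^sup>2*r) \<le> 2*r\<^sup>2 + t^8 + N^4" using a b by linarith
  moreover have "0 \<le> r\<^sup>2" by simp
  moreover have "0 \<le> t^8" by (simp add: zero_le_even_power)
  moreover have "0 \<le> N^4" using assms by simp
  ultimately have "N*(t\<^sup>2*r) \<le> r\<^sup>2 + t^8 + E" using assms by linarith
  then show ?thesis using assms(1) by (simp add: field_simps)
qed

lemma key_pt:
  fixes f r xi t D Nr E AL :: real
  assumes "Nr \<ge> 1" "r \<ge> 0" "f \<ge> 0" "D \<ge> 0" "f \<le> 2*D*(xi\<^sup>2+t\<^sup>2)"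
    "r \<le> AL \<or> E \<ge> Nr^4" "AL \<ge> 0" "E \<ge> 0"
  shows "f*r \<le> AL*f + 2*D*(xi\<^sup>2+1)*(r\<^sup>2+t^8+E)/Nr"
proof -
  define G where "G = (r\<^sup>2+t^8+E)/Nr"
  have "0 \<le> t^8" by (simp add: zero_le_even_power)
  then have Gnn: "0 \<le> G" unfolding G_def using assms by simp
  have eq: "2*D*(xi\<^sup>2+1)*(r\<^sup>2+t^8+E)/Nr = 2*D*(xi\<^sup>2+1)*G" unfolding G_def by simp
  have R0: "0 \<le> 2*D*(xi\<^sup>2+1)*G" using Gnn assms by simp
  show ?thesis
  proof (cases "r \<le> AL")
    case True
    then have "f*r \<le> AL*f" using assms mult_left_mono[OF True, of f] by (simp add: mult.commute)
    then show ?thesis using R0 eq by linarith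
  next
    case False
    then have E: "E \<ge> Nr^4" using assms by auto
    have r1: "r \<le> G" unfolding G_def using amgm1[OF assms(1,2) E] .
    have r2: "t\<^sup>2 * r \<le> G" unfolding G_def using amgm2[OF assms(1,2) E] .
    have "f*r \<le> 2*D*(xi\<^sup>2+t\<^sup>2)*r" using assms by (simp add: mult_right_mono)
    also have "\<dots> = 2*D*(xi\<^sup>2*r + t\<^sup>2*r)" by (simp add: algebra_simps)
    also have "\<dots> \<le> 2*D*(xi\<^sup>2*G + G)"
      using r1 r2 assms by (intro mult_left_mono add_mono) (auto intro: mult_left_mono)
    also have "\<dots> = 2*D*(xi\<^sup>2+1)*G" by (simp add: algebra_simps)
    finally have "f*r \<le> 2*D*(xi\<^sup>2+1)*G" .
    moreover have "0 \<le> AL*f" using assms by simp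
    ultimately show ?thesis using eq by linarith
  qed
qed

lemma ratio_bound:
  fixes c m K Nr lx :: real
  assumes "c > 0" "m \<ge> 0" "K > 0" "Nr \<ge> 2" "0 \<le> lx" "lx \<le> K * ln Nr"
  shows "c*(rpow lx m + 1) \<le> c*(K powr m + (1/ln 2) powr m) * rpow (ln Nr) m"
proof (cases "m = 0")
  case True then show ?thesis using assms by (simp add: rpow_def)
next
  case False
  have l2: "ln 2 > (0::real)" by simp
  have lN: "ln 2 \<le> ln Nr" using assms by simp
  then have lNp: "ln Nr > 0" using l2 by linarith
  have a: "lx powr m \<le> K powr m * ln Nr powr m"
  proof -
    have "lx powr m \<le> (K * ln Nr) powr m" using assms by (intro powr_mono2) auto
    also have "\<dots> = K powr m * ln Nr powr m" using assms lNp by (simp add: powr_mult)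
    finally show ?thesis .
  qed
  have b: "1 \<le> (1/ln 2) powr m * ln Nr powr m"
  proof -
    have "(1/ln 2) powr m * ln Nr powr m = (ln Nr / ln 2) powr m" using lNp l2
      by (simp add: powr_mult[symmetric])
    moreover have "1 \<le> ln Nr / ln 2" using lN l2 by simp
    ultimately show ?thesis using assms by (simp add: ge_one_powr_ge_zero)
  qed
  have "rpow lx m + 1 \<le> (K powr m + (1/ln 2) powr m) * rpow (ln Nr) m"
    using a b False by (simp add: rpow_def algebra_simps)
  then show ?thesis using assms by (simp add: mult.assoc)
qed

theorem proposition4p3:
  fixes p q :: "real^'d \<Rightarrow> real"
    and M :: "'w measure"
    and theta0 :: "real^'d \<Rightarrow> real^'k"
    and thetahat :: "nat \<Rightarrow> 'w \<Rightarrow> real^'d \<Rightarrow> real^'k"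
    and xi :: "nat \<Rightarrow> real"
    and c m :: real
  assumes M: "prob_space M"
    and p_meas: "p \<in> borel_measurable lborel" and q_meas: "q \<in> borel_measurable lborel"
    and p_nonneg: "\<And>x. p x \<ge> 0" and q_nonneg: "\<And>x. q x \<ge> 0"
    and p_prob: "prob_space (density lborel (\<lambda>x. ennreal (p x)))"
    and q_prob: "prob_space (density lborel (\<lambda>x. ennreal (q x)))"
    and supp: "{x. q x > 0} \<subseteq> {x. p x > 0}"
    and theta0_meas: "theta0 \<in> borel_measurable borel"
    and thetahat_meas: "\<And>N. N \<ge> 1 \<Longrightarrow>
          (\<lambda>z. thetahat N (fst z) (snd z)) \<in> borel_measurable (M \<Otimes>\<^sub>M lborel)"
    and bdd: "\<And>N. N \<ge> 1 \<Longrightarrow>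
          AE z in M \<Otimes>\<^sub>M density lborel (\<lambda>x. ennreal (p x)).
            linf (thetahat N (fst z) (snd z)) \<le> xi N"
    and mom8: "integrable (density lborel (\<lambda>x. ennreal (p x))) (\<lambda>x. linf (theta0 x) ^ 8)"
    and c_pos: "c > 0" and m_nonneg: "m \<ge> 0"
    and ratio_growth: "\<And>x. q x / p x \<le> c * (rpow (linf x) m + 1)"
    and ratio_L2: "integrable (density lborel (\<lambda>x. ennreal (p x))) (\<lambda>x. (q x / p x)\<^sup>2)"
    and expmom: "\<exists>\<sigma>>0. integrable (density lborel (\<lambda>x. ennreal (p x)))
                         (\<lambda>x. exp (\<sigma> * linf x))"
  shows "\<exists>c1 c2. \<forall>N::nat. N \<ge> 2 \<longrightarrow>
     (\<integral>z. (norm (thetahat N (fst z) (snd z) - theta0 (snd z)))\<^sup>2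
        \<partial>(M \<Otimes>\<^sub>M density lborel (\<lambda>x. ennreal (q x))))
     = (\<integral>z. (norm (thetahat N (fst z) (snd z) - theta0 (snd z)))\<^sup>2 * (q (snd z) / p (snd z))
        \<partial>(M \<Otimes>\<^sub>M density lborel (\<lambda>x. ennreal (p x))))
   \<and> (\<integral>z. (norm (thetahat N (fst z) (snd z) - theta0 (snd z)))\<^sup>2 * (q (snd z) / p (snd z))
        \<partial>(M \<Otimes>\<^sub>M density lborel (\<lambda>x. ennreal (p x))))
     \<le> c1 * rpow (ln (real N)) m *
          (\<integral>z. (norm (thetahat N (fst z) (snd z) - theta0 (snd z)))\<^sup>2
             \<partial>(M \<Otimes>\<^sub>M density lborel (\<lambda>x. ennreal (p x))))
       + c2 * real CARD('k) * ((xi N)\<^sup>2 + 1) / real N"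
proof -
  let ?P = "density lborel (\<lambda>x. ennreal (p x))"
  let ?Q = "density lborel (\<lambda>x. ennreal (q x))"
  define r where "r = (\<lambda>x. q x / p x)"
  define f where "f = (\<lambda>N z. (norm (thetahat N (fst z) (snd z) - theta0 (snd z)))\<^sup>2)"
  define D where "D = real CARD('k)"
  obtain \<sigma> where sig: "\<sigma> > 0" and expint: "integrable ?P (\<lambda>x. exp (\<sigma> * linf x))"
    using expmom by blast
  define K where "K = 4 / \<sigma>"
  define A where "A = c * (K powr m + (1/ln 2) powr m)"
  define G where "G x = (r x)\<^sup>2 + linf (theta0 x) ^ 8 + exp (\<sigma> * linf x)" for x
  have Gint: "integrable ?P G" unfolding G_def r_def using ratio_L2 mom8 expint by auto
  have Psf: "sigma_finite_measure ?P" using p_prob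
    by (simp add: prob_space_imp_sigma_finite)
  have Qsf: "sigma_finite_measure ?Q" using q_prob
    by (simp add: prob_space_imp_sigma_finite)
  have sP: "sets (M \<Otimes>\<^sub>M ?P) = sets (M \<Otimes>\<^sub>M lborel)" by (intro sets_pair_measure_cong) auto
  have sQ: "sets (M \<Otimes>\<^sub>M ?Q) = sets (M \<Otimes>\<^sub>M lborel)" by (intro sets_pair_measure_cong) auto
  have th0: "theta0 \<in> borel_measurable lborel" using theta0_meas by simp
  have fL: "f N \<in> borel_measurable (M \<Otimes>\<^sub>M lborel)" if "N \<ge> 1" for N
    unfolding f_def using thetahat_meas[OF that] th0 by measurable
  have fP: "f N \<in> borel_measurable (M \<Otimes>\<^sub>M ?P)" if "N \<ge> 1" for N
    using fL[OF that] measurable_cong_sets[OF sP refl] by simp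
  have fQ: "f N \<in> borel_measurable (M \<Otimes>\<^sub>M ?Q)" if "N \<ge> 1" for N
    using fL[OF that] measurable_cong_sets[OF sQ refl] by simp
  have rL: "(\<lambda>z. r (snd z)) \<in> borel_measurable (M \<Otimes>\<^sub>M lborel)"
    unfolding r_def using p_meas q_meas by measurable
  have rP: "(\<lambda>z. r (snd z)) \<in> borel_measurable (M \<Otimes>\<^sub>M ?P)"
    using rL measurable_cong_sets[OF sP refl] by simp
  have r_nn: "r x \<ge> 0" for x unfolding r_def using p_nonneg q_nonneg by simp
  have f_nn: "f N z \<ge> 0" for N z unfolding f_def by simp
  have Pprob: "prob_space ?P" by (rule p_prob)
  interpret PP: pair_prob_space M ?P
    by (simp add: pair_prob_space_def pair_sigma_finite_def M p_prob prob_space_imp_sigma_finite)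
  have Gsnd: "integrable (M \<Otimes>\<^sub>M ?P) (\<lambda>z. G (snd z))"
    and Gsnd_eq: "integral\<^sup>L (M \<Otimes>\<^sub>M ?P) (\<lambda>z. G (snd z)) = integral\<^sup>L ?P G"
    using snd_integral[OF M Psf Gint] by auto
  have G_nn: "G x \<ge> 0" for x unfolding G_def by (simp add: zero_le_even_power)
  have m8snd: "integrable (M \<Otimes>\<^sub>M ?P) (\<lambda>z. linf (theta0 (snd z)) ^ 8)"
    using snd_integral(1)[OF M Psf mom8] by simp
  have key: "integral\<^sup>L (M \<Otimes>\<^sub>M ?Q) (f N) = integral\<^sup>L (M \<Otimes>\<^sub>M ?P) (\<lambda>z. f N z * r (snd z))
     \<and> integral\<^sup>L (M \<Otimes>\<^sub>M ?P) (\<lambda>z. f N z * r (snd z))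
        \<le> A * rpow (ln (real N)) m * integral\<^sup>L (M \<Otimes>\<^sub>M ?P) (f N)
          + 2 * integral\<^sup>L ?P G * D * ((xi N)\<^sup>2 + 1) / real N" if N: "N \<ge> 2" for N
  proof -
    have N1: "N \<ge> 1" using N by simp
    define Nr where "Nr = real N"
    have Nr2: "Nr \<ge> 2" using N unfolding Nr_def by simp
    define L where "L = rpow (ln Nr) m"
    have L_nn: "L \<ge> 0" unfolding L_def rpow_def by simp
    have A_nn: "A \<ge> 0" unfolding A_def using c_pos by simp
    have D_nn: "D \<ge> 0" unfolding D_def by simp
    have eqn: "integral\<^sup>L (M \<Otimes>\<^sub>M ?Q) (f N) = integral\<^sup>L (M \<Otimes>\<^sub>M ?P) (\<lambda>z. f N z * r (snd z))"
    proof -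
      have rlb: "r \<in> borel_measurable lborel" unfolding r_def using p_meas q_meas by measurable
      have nn: "(\<integral>\<^sup>+z. ennreal (f N z) \<partial>(M \<Otimes>\<^sub>M ?Q)) = (\<integral>\<^sup>+z. ennreal (f N z * r (snd z)) \<partial>(M \<Otimes>\<^sub>M ?P))"
      proof -
        have "(\<integral>\<^sup>+z. ennreal (f N z) \<partial>(M \<Otimes>\<^sub>M ?Q)) = (\<integral>\<^sup>+w. \<integral>\<^sup>+x. ennreal (f N (w,x)) \<partial>?Q \<partial>M)"
          using sigma_finite_measure.nn_integral_fst[OF Qsf, of "\<lambda>z. ennreal (f N z)" M] fQ[OF N1] by simp
        also have "\<dots> = (\<integral>\<^sup>+w. \<integral>\<^sup>+x. ennreal (f N (w,x) * r x) \<partial>?P \<partial>M)"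
        proof (rule nn_integral_cong)
          fix w assume w: "w \<in> space M"
          have m: "(\<lambda>x. f N (w,x)) \<in> borel_measurable lborel"
            using measurable_Pair2[OF fL[OF N1] w] by simp
          have "(\<integral>\<^sup>+x. ennreal (f N (w,x)) \<partial>?Q) = (\<integral>\<^sup>+x. ennreal (q x) * ennreal (f N (w,x)) \<partial>lborel)"
            using m q_meas by (simp add: nn_integral_density)
          also have "\<dots> = (\<integral>\<^sup>+x. ennreal (p x) * ennreal (f N (w,x) * r x) \<partial>lborel)"
          proof (rule nn_integral_cong)
            fix x
            show "ennreal (q x) * ennreal (f N (w,x)) = ennreal (p x) * ennreal (f N (w,x) * r x)"
            proof (cases "p x = 0")
              case True then have "q x = 0" using subsetD[OF supp, of x] q_nonneg[of x] by fastforce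
              then show ?thesis using True by simp
            next
              case False then have "q x = p x * r x" unfolding r_def by simp
              then show ?thesis using p_nonneg[of x] q_nonneg[of x] f_nn[of N "(w,x)"] r_nn[of x]
                by (simp add: ennreal_mult[symmetric] mult_ac)
            qed
          qed
          also have "\<dots> = (\<integral>\<^sup>+x. ennreal (f N (w,x) * r x) \<partial>?P)"
            using m p_meas rlb by (simp add: nn_integral_density)
          finally show "(\<integral>\<^sup>+x. ennreal (f N (w,x)) \<partial>?Q) = (\<integral>\<^sup>+x. ennreal (f N (w,x) * r x) \<partial>?P)" .
        qed
        also have "\<dots> = (\<integral>\<^sup>+z. ennreal (f N z * r (snd z)) \<partial>(M \<Otimes>\<^sub>M ?P))"
        proof -
          have "(\<lambda>z. ennreal (f N z * r (snd z))) \<in> borel_measurable (M \<Otimes>\<^sub>M ?P)"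
            using fP[OF N1] rP by measurable
          then show ?thesis
            using sigma_finite_measure.nn_integral_fst[OF Psf, of "\<lambda>z. ennreal (f N z * r (snd z))" M] by simp
        qed
        finally show ?thesis .
      qed
      have "integral\<^sup>L (M \<Otimes>\<^sub>M ?Q) (f N) = enn2real (\<integral>\<^sup>+z. ennreal (f N z) \<partial>(M \<Otimes>\<^sub>M ?Q))"
        using fQ[OF N1] f_nn by (intro integral_eq_nn_integral) auto
      also have "\<dots> = enn2real (\<integral>\<^sup>+z. ennreal (f N z * r (snd z)) \<partial>(M \<Otimes>\<^sub>M ?P))" using nn by simp
      also have "\<dots> = integral\<^sup>L (M \<Otimes>\<^sub>M ?P) (\<lambda>z. f N z * r (snd z))"
        using fP[OF N1] rP f_nn r_nn by (intro integral_eq_nn_integral[symmetric]) auto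
      finally show ?thesis .
    qed
    have fbound: "AE z in M \<Otimes>\<^sub>M ?P. f N z \<le> 2*D*((xi N)\<^sup>2 + (linf (theta0 (snd z)))\<^sup>2)"
      using bdd[OF N1]
    proof eventually_elim
      case (elim z)
      let ?a = "thetahat N (fst z) (snd z)" and ?b = "theta0 (snd z)"
      have "f N z \<le> 2 * (norm ?a)\<^sup>2 + 2 * (norm ?b)\<^sup>2"
      proof -
        have "norm (?a - ?b) \<le> norm ?a + norm ?b" by (rule norm_triangle_ineq4)
        then have s1: "(norm (?a - ?b))\<^sup>2 \<le> (norm ?a + norm ?b)\<^sup>2" by (simp add: power_mono)
        have s2: "(norm ?a + norm ?b)\<^sup>2 \<le> 2 * (norm ?a)\<^sup>2 + 2 * (norm ?b)\<^sup>2"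
          using zero_le_power2[of "norm ?a - norm ?b"] by (simp add: power2_eq_square algebra_simps)
        show ?thesis unfolding f_def using order_trans[OF s1 s2] by simp
      qed
      also have "\<dots> \<le> 2 * (D * (xi N)\<^sup>2) + 2 * (D * (linf ?b)\<^sup>2)"
      proof -
        have "(linf ?a)\<^sup>2 \<le> (xi N)\<^sup>2" using elim linf_nonneg[of ?a] by (simp add: power_mono)
        then have "(norm ?a)\<^sup>2 \<le> D * (xi N)\<^sup>2"
          using norm_le_linf[of ?a] D_nn unfolding D_def by (meson mult_left_mono order_trans)
        moreover have "(norm ?b)\<^sup>2 \<le> D * (linf ?b)\<^sup>2" using norm_le_linf[of ?b] unfolding D_def .
        ultimately show ?thesis by simp
      qed
      finally show ?case by (simp add: algebra_simps)
    qed
    have ptw: "AE z in M \<Otimes>\<^sub>M ?P. f N z * r (snd z) \<le> A * L * f N z + 2*D*((xi N)\<^sup>2+1)/Nr * G (snd z)"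
      using fbound
    proof eventually_elim
      case (elim z)
      let ?x = "snd z"
      have cases: "r ?x \<le> A * L \<or> exp (\<sigma> * linf ?x) \<ge> Nr^4"
      proof (cases "linf ?x \<le> K * ln Nr")
        case True
        have "r ?x \<le> c * (rpow (linf ?x) m + 1)" using ratio_growth unfolding r_def .
        also have "\<dots> \<le> A * L" unfolding A_def L_def
          using ratio_bound[OF c_pos m_nonneg _ Nr2 linf_nonneg True] sig unfolding K_def by simp
        finally show ?thesis by simp
      next
        case False
        have "exp (real 4 * ln Nr) = exp (ln Nr)^4" by (rule exp_of_nat_mult)
        then have "Nr^4 = exp (4 * ln Nr)" using Nr2 by simp
        also have "\<dots> \<le> exp (\<sigma> * linf ?x)" using False sig unfolding K_def
          by (simp add: field_simps)
        finally show ?thesis by simp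
      qed
      have "f N z * r ?x \<le> A * L * f N z + 2*D*((xi N)\<^sup>2+1)*((r ?x)\<^sup>2 + (linf (theta0 ?x))^8 + exp (\<sigma> * linf ?x))/Nr"
        by (rule key_pt[OF _ r_nn f_nn D_nn elim cases]) (use Nr2 A_nn L_nn in auto)
      then show ?case unfolding G_def by (simp add: field_simps)
    qed
    have t8: "t\<^sup>2 \<le> 1 + t^8" for t :: real
    proof (cases "t\<^sup>2 \<le> 1")
      case True then show ?thesis by (simp add: zero_le_even_power add_increasing2)
    next
      case False
      have "(t\<^sup>2)^1 \<le> (t\<^sup>2)^4" by (rule power_increasing) (use False in auto)
      moreover have "(t\<^sup>2)^4 = t^8" by (simp flip: power_mult)
      ultimately show ?thesis by simp
    qed
    have f_int: "integrable (M \<Otimes>\<^sub>M ?P) (f N)"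
    proof (rule Bochner_Integration.integrable_bound[OF _ fP[OF N1]])
      show "integrable (M \<Otimes>\<^sub>M ?P) (\<lambda>z. 2*D*((xi N)\<^sup>2 + 1) + 2*D*(linf (theta0 (snd z)) ^ 8))"
        using m8snd by auto
      show "AE z in M \<Otimes>\<^sub>M ?P. norm (f N z) \<le> norm (2*D*((xi N)\<^sup>2 + 1) + 2*D*(linf (theta0 (snd z)) ^ 8))"
        using fbound
      proof eventually_elim
        case (elim z)
        have "f N z \<le> 2*D*((xi N)\<^sup>2 + 1) + 2*D*(linf (theta0 (snd z)) ^ 8)"
          using elim t8[of "linf (theta0 (snd z))"] D_nn
          by (smt (verit, best) distrib_left mult_left_mono)
        moreover have "0 \<le> 2*D*((xi N)\<^sup>2 + 1) + 2*D*(linf (theta0 (snd z)) ^ 8)"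
          using D_nn by (simp add: zero_le_even_power)
        ultimately show ?case using f_nn[of N z] by simp
      qed
    qed
    define C where "C = 2*D*((xi N)\<^sup>2+1)/Nr"
    have bound_int: "integrable (M \<Otimes>\<^sub>M ?P) (\<lambda>z. A * L * f N z + C * G (snd z))"
      using f_int Gsnd by auto
    have fr_int: "integrable (M \<Otimes>\<^sub>M ?P) (\<lambda>z. f N z * r (snd z))"
    proof (rule Bochner_Integration.integrable_bound[OF bound_int])
      show "(\<lambda>z. f N z * r (snd z)) \<in> borel_measurable (M \<Otimes>\<^sub>M ?P)"
        using fP[OF N1] rP by measurable
      show "AE z in M \<Otimes>\<^sub>M ?P. norm (f N z * r (snd z)) \<le> norm (A * L * f N z + C * G (snd z))"
        using ptw
      proof eventually_elim
        case (elim z)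
        then show ?case using f_nn[of N z] r_nn[of "snd z"] unfolding C_def by simp
      qed
    qed
    have "integral\<^sup>L (M \<Otimes>\<^sub>M ?P) (\<lambda>z. f N z * r (snd z))
        \<le> integral\<^sup>L (M \<Otimes>\<^sub>M ?P) (\<lambda>z. A * L * f N z + C * G (snd z))"
      using ptw unfolding C_def by (intro integral_mono_AE fr_int bound_int[unfolded C_def]) auto
    also have "\<dots> = A * L * integral\<^sup>L (M \<Otimes>\<^sub>M ?P) (f N) + C * integral\<^sup>L ?P G"
      using f_int Gsnd Gsnd_eq by simp
    also have "\<dots> = A * rpow (ln (real N)) m * integral\<^sup>L (M \<Otimes>\<^sub>M ?P) (f N)
          + 2 * integral\<^sup>L ?P G * D * ((xi N)\<^sup>2 + 1) / real N"
      unfolding C_def L_def Nr_def by simp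
    finally show ?thesis using eqn by simp
  qed
  show ?thesis
    apply (rule exI[where x=A], rule exI[where x="2 * integral\<^sup>L ?P G"], intro allI impI)
    subgoal for N using key[of N] unfolding f_def r_def D_def by simp
    done
qed

end
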